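(* Let $\Gamma$ be the subgroup of $\mathrm{Isom}(\mathbb{R}^2)$, identifying $\mathbb{R}^2\cong\mathbb{C}$, consisting of all translations $z\mapsto z+a$ and all $180^\circ$ rotations $z\mapsto -z+2a$ ($a\in\mathbb{C}$). Then, with $2$ colors, $\mathrm{ext}_D(\mathbb{R}^2,\Gamma)=4$.
   Context: Let a group $\Gamma$ act faithfully on a set $X$. A coloring $c:X\to\{R,B\}$ is $\Gamma$-distinguishing if the only $\gamma\in\Gamma$ with $c\circ\gamma=c$ is the identity. For $W\subset X$ whose pointwise stabilizer in $\Gamma$ is trivial, the property $P(W)$ holds if every precoloring $c:X\setminus W\to\{R,B\}$ can be extended to a $\Gamma$-distinguishing coloring $X\to\{R,B\}$. The distinguishing extension number $\mathrm{ext}_D(X,\Gamma)$ is the smallest $m$ such that every $W\subset X$ with $|W|\geq m$ and trivial pointwise stabilizer satisfies $P(W)$ ($\infty$ if none exists). *)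

theory Defs
  imports Complex_Main "HOL-Library.Extended_Nat"
begin

text \<open>A group acting faithfully on a set X is represented by a set G of
 bijections of the type 'a (X = UNIV). Colorings with two colours R, B are
 functions 'a \<Rightarrow> bool (True = R, False = B).\<close>

definition distinguishing :: "('a \<Rightarrow> 'a) set \<Rightarrow> ('a \<Rightarrow> bool) \<Rightarrow> bool" where
  "distinguishing G c \<longleftrightarrow> (\<forall>g\<in>G. c \<circ> g = c \<longrightarrow> g = id)"

definition trivial_pointwise_stabilizer :: "('a \<Rightarrow> 'a) set \<Rightarrow> 'a set \<Rightarrow> bool" where
  "trivial_pointwise_stabilizer G W \<longleftrightarrow> (\<forall>g\<in>G. (\<forall>w\<in>W. g w = w) \<longrightarrow> g = id)"

text \<open>P(W): every precoloring of X - W (only the values outside W matter)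
 extends to a distinguishing coloring.\<close>
definition prop_P :: "('a \<Rightarrow> 'a) set \<Rightarrow> 'a set \<Rightarrow> bool" where
  "prop_P G W \<longleftrightarrow> (\<forall>c::'a \<Rightarrow> bool. \<exists>c'. (\<forall>x. x \<notin> W \<longrightarrow> c' x = c x) \<and> distinguishing G c')"

definition card_ge :: "'a set \<Rightarrow> nat \<Rightarrow> bool" where
  "card_ge W m \<longleftrightarrow> infinite W \<or> card W \<ge> m"

definition ext_good :: "('a \<Rightarrow> 'a) set \<Rightarrow> nat \<Rightarrow> bool" where
  "ext_good G m \<longleftrightarrow> (\<forall>W. card_ge W m \<and> trivial_pointwise_stabilizer G W \<longrightarrow> prop_P G W)"

definition ext_D :: "('a \<Rightarrow> 'a) set \<Rightarrow> enat" where
  "ext_D G = (if \<exists>m. ext_good G m then enat (LEAST m. ext_good G m) else \<infinity>)"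

definition Gamma_tr_rot :: "(complex \<Rightarrow> complex) set" where
  "Gamma_tr_rot = {(\<lambda>z. z + a) | a. True} \<union> {(\<lambda>z. - z + 2 * a) | a. True}"

end

theory Submission imports Defs begin

definition lt :: "complex \<Rightarrow> complex \<Rightarrow> complex \<Rightarrow> bool" where
"lt w x y \<longleftrightarrow> Re (cnj w * x) < Re (cnj w * y) \<or> (Re (cnj w * x) = Re (cnj w * y) \<and> Im (cnj w * x) < Im (cnj w * y))"

lemma lt_irrefl: "\<not> lt w x x" by (simp add: lt_def)
lemma lt_trans: "lt w x y \<Longrightarrow> lt w y z \<Longrightarrow> lt w x z" unfolding lt_def by linarith
lemma lt_asym: "lt w x y \<Longrightarrow> \<not> lt w y x" unfolding lt_def by linarith
lemma lt_total: assumes "w \<noteq> 0" "x \<noteq> y" shows "lt w x y \<or> lt w y x"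
proof (rule ccontr)
  assume "\<not> (lt w x y \<or> lt w y x)"
  then have "Re (cnj w * x) = Re (cnj w * y)" "Im (cnj w * x) = Im (cnj w * y)" unfolding lt_def by linarith+
  then have "cnj w * x = cnj w * y" by (simp add: complex_eq_iff)
  with assms show False by simp
qed
lemma lt_add: "lt w x y \<Longrightarrow> lt w (x + c) (y + c)" unfolding lt_def by (simp add: distrib_left)
lemma lt_neg: "lt w x y \<Longrightarrow> lt w (- y) (- x)"
  unfolding lt_def by (elim disjE conjE) (simp_all add: algebra_simps)
lemma lt_pos: "w \<noteq> 0 \<Longrightarrow> lt w 0 w"
proof -
  assume "w \<noteq> 0"
  have "Re (cnj w * w) = (Re w)^2 + (Im w)^2" by (simp add: power2_eq_square)
  moreover have "(Re w)^2 + (Im w)^2 > 0" using \<open>w \<noteq> 0\<close> by (simp add: complex_eq_iff sum_power2_gt_zero_iff)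
  ultimately show ?thesis unfolding lt_def by simp
qed

lemma lt_max: assumes "finite X" "X \<noteq> {}" "w \<noteq> 0" shows "\<exists>M\<in>X. \<forall>y\<in>X. y = M \<or> lt w y M"
  using assms(1,2)
proof (induction X rule: finite_ne_induct)
  case (singleton x) then show ?case by simp
next
  case (insert x F)
  then obtain M where M: "M \<in> F" "\<forall>y\<in>F. y = M \<or> lt w y M" by blast
  show ?case
  proof (cases "lt w x M")
    case True then show ?thesis using M by auto
  next
    case False
    then have "x = M \<or> lt w M x" using lt_total[OF assms(3)] by blast
    then show ?thesis
    proof
      assume "x = M" then show ?thesis using M by auto
    next
      assume xm: "lt w M x"
      have "\<forall>y\<in>insert x F. y = x \<or> lt w y x"
      proof
        fix y assume "y \<in> insert x F"
        then show "y = x \<or> lt w y x" using M(2) xm lt_trans[of w y M x] by auto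
      qed
      then show ?thesis by blast
    qed
  qed
qed

lemma lt_min: assumes "finite X" "X \<noteq> {}" "w \<noteq> 0" shows "\<exists>M\<in>X. \<forall>y\<in>X. y = M \<or> lt w M y"
  using assms(1,2)
proof (induction X rule: finite_ne_induct)
  case (singleton x) then show ?case by simp
next
  case (insert x F)
  then obtain M where M: "M \<in> F" "\<forall>y\<in>F. y = M \<or> lt w M y" by blast
  show ?case
  proof (cases "lt w M x")
    case True then show ?thesis using M by auto
  next
    case False
    then have "x = M \<or> lt w x M" using lt_total[OF assms(3)] by blast
    then show ?thesis
    proof
      assume "x = M" then show ?thesis using M by auto
    next
      assume xm: "lt w x M"
      have "\<forall>y\<in>insert x F. y = x \<or> lt w x y"
      proof
        fix y assume "y \<in> insert x F"
        then show "y = x \<or> lt w x y" using M(2) xm lt_trans[of w x M y] by auto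
      qed
      then show ?thesis by blast
    qed
  qed
qed

lemma center:
  assumes sym: "\<forall>x. (2*z - x \<in> X) = (x \<in> X)"
    and M: "M \<in> X" "\<forall>y\<in>X. y = M \<or> lt w y M"
    and m: "m \<in> X" "\<forall>y\<in>X. y = m \<or> lt w m y"
  shows "2*z = M + m"
proof (rule ccontr)
  assume ne: "2*z \<noteq> M + m"
  have "2*z - M \<in> X" using sym M(1) by simp
  moreover have "2*z - M \<noteq> m" using ne by (auto simp: algebra_simps)
  ultimately have "lt w m (2*z - M)" using m(2) by blast
  then have "lt w (- (2*z - M)) (- m)" by (rule lt_neg)
  then have "lt w (- (2*z - M) + 2*z) (- m + 2*z)" by (rule lt_add)
  then have l: "lt w M (2*z - m)" by (simp add: algebra_simps)
  have "2*z - m \<in> X" using sym m(1) by simp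
  then have "2*z - m = M \<or> lt w (2*z - m) M" using M(2) by blast
  then show False using l lt_irrefl lt_asym by blast
qed

lemma max_eq:
  assumes t: "t \<in> X" "t \<in> Y" and agr: "\<forall>x. lt w t x \<longrightarrow> (x \<in> X) = (x \<in> Y)"
    and MX: "MX \<in> X" "\<forall>y\<in>X. y = MX \<or> lt w y MX"
    and MY: "MY \<in> Y" "\<forall>y\<in>Y. y = MY \<or> lt w y MY"
  shows "MX = MY"
proof -
  have "MY \<in> X"
  proof (cases "MY = t")
    case True then show ?thesis using t by simp
  next
    case False then have "lt w t MY" using MY(2) t(2) by metis
    then show ?thesis using agr MY(1) by blast
  qed
  then have 1: "MY = MX \<or> lt w MY MX" using MX(2) by blast
  have "MX \<in> Y"
  proof (cases "MX = t")
    case True then show ?thesis using t by simp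
  next
    case False then have "lt w t MX" using MX(2) t(1) by metis
    then show ?thesis using agr MX(1) by blast
  qed
  then have 2: "MX = MY \<or> lt w MX MY" using MY(2) by blast
  from 1 2 show ?thesis using lt_asym by blast
qed

lemma min_eq:
  assumes t: "t \<in> X" "t \<in> Y" and agr: "\<forall>x. lt w x t \<longrightarrow> (x \<in> X) = (x \<in> Y)"
    and MX: "MX \<in> X" "\<forall>y\<in>X. y = MX \<or> lt w MX y"
    and MY: "MY \<in> Y" "\<forall>y\<in>Y. y = MY \<or> lt w MY y"
  shows "MX = MY"
proof -
  have "MY \<in> X"
  proof (cases "MY = t")
    case True then show ?thesis using t by simp
  next
    case False then have "lt w MY t" using MY(2) t(2) by metis
    then show ?thesis using agr MY(1) by blast
  qed
  then have 1: "MY = MX \<or> lt w MX MY" using MX(2) by blast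
  have "MX \<in> Y"
  proof (cases "MX = t")
    case True then show ?thesis using t by simp
  next
    case False then have "lt w MX t" using MX(2) t(1) by metis
    then show ?thesis using agr MX(1) by blast
  qed
  then have 2: "MX = MY \<or> lt w MY MX" using MY(2) by blast
  from 1 2 show ?thesis using lt_asym by blast
qed

lemma Gamma_cases:
  assumes "g \<in> Gamma_tr_rot"
  obtains a where "g = (\<lambda>z. z + a)" | a where "g = (\<lambda>z. - z + 2 * a)"
  using assms unfolding Gamma_tr_rot_def by blast

lemma lemG:
  fixes f :: "complex \<Rightarrow> bool"
  assumes g: "g \<in> Gamma_tr_rot" "g \<noteq> id" "f \<circ> g = f"
  and fin: "finite {x. f x \<noteq> f (x - w)}"
  shows "\<exists>z. \<forall>x. (2*z - x \<in> {x. f x \<noteq> f (x - w)}) = (x \<in> {x. f x \<noteq> f (x - w)})"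
  using g(1)
proof (cases rule: Gamma_cases)
  case (1 a)
  have a0: "a \<noteq> 0"
  proof
    assume "a = 0"
    then have "g = id" using 1 by (simp add: fun_eq_iff)
    with g(2) show False by simp
  qed
  have inv: "\<And>x. f (x + a) = f x" using g(3) 1 by (metis comp_apply)
  let ?E = "{x. f x \<noteq> f (x - w)}"
  have shift: "x + a \<in> ?E" if "x \<in> ?E" for x
  proof -
    have "f (x + a - w) = f (x - w)" using inv[of "x - w"] by (simp add: algebra_simps)
    then show ?thesis using that inv[of x] by simp
  qed
  have "?E = {}"
  proof (rule ccontr)
    assume "?E \<noteq> {}"
    then obtain x where x: "x \<in> ?E" by blast
    have all: "x + of_nat k * a \<in> ?E" for k
    proof (induction k)
      case 0 then show ?case using x by simp
    next
      case (Suc k)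
      from shift[OF Suc] show ?case by (simp add: algebra_simps)
    qed
    have inj: "inj (\<lambda>k::nat. x + of_nat k * a)"
      by (rule injI) (use a0 in simp)
    have "range (\<lambda>k::nat. x + of_nat k * a) \<subseteq> ?E" using all by blast
    then have "finite (range (\<lambda>k::nat. x + of_nat k * a))" using fin finite_subset by blast
    then have "finite (UNIV::nat set)" using inj finite_imageD by blast
    then show False by simp
  qed
  then show ?thesis by auto
next
  case (2 a)
  have inv: "\<And>x. f (- x + 2 * a) = f x" using g(3) 2 by (metis comp_apply)
  show ?thesis
  proof (intro exI allI)
    fix x
    have e1: "2 * (a + w/2) - x = - (x - w) + 2 * a" by (simp add: algebra_simps)
    have e2: "2 * (a + w/2) - x - w = - x + 2 * a" by (simp add: algebra_simps)
    have e3: "- (x - w) + 2 * a - w = - x + 2 * a" by (simp add: algebra_simps)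
    show "(2 * (a + w / 2) - x \<in> {x. f x \<noteq> f (x - w)}) = (x \<in> {x. f x \<noteq> f (x - w)})"
      using inv[of "x - w"] inv[of x] by (simp only: mem_Collect_eq e1 e2 e3) blast
  qed
qed


lemma pair_center:
  fixes X0 X1 :: "complex set"
  assumes s0: "\<forall>x. (2*z - x \<in> X0) = (x \<in> X0)" and s1: "\<forall>x. (2*z - x \<in> X1) = (x \<in> X1)"
    and d: "\<forall>x. (x \<in> X1) = ((x \<in> X0) \<noteq> ((x = p) \<noteq> (x - w = p)))"
    and w0: "w \<noteq> 0"
  shows "2*z = 2*p + w"
proof -
  have diff: "(x \<in> X1) \<noteq> (x \<in> X0) \<longleftrightarrow> ((x = p) \<noteq> (x - w = p))" for x using d by blast
  have "(p \<in> X1) \<noteq> (p \<in> X0)" using diff[of p] w0 by simp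
  then have "(2*z - p \<in> X1) \<noteq> (2*z - p \<in> X0)" using s0 s1 by simp
  then have h1: "(2*z - p = p) \<noteq> (2*z - p - w = p)" using diff by blast
  have "(p + w \<in> X1) \<noteq> (p + w \<in> X0)" using diff[of "p+w"] w0 by simp
  then have "(2*z - (p+w) \<in> X1) \<noteq> (2*z - (p+w) \<in> X0)" using s0 s1 by simp
  then have h2: "(2*z - (p+w) = p) \<noteq> (2*z - (p+w) - w = p)" using diff by blast
  define u where "u = 2*z - 2*p"
  have e1: "(2*z - p = p) = (u = 0)" "(2*z - p - w = p) = (u = w)"
    "(2*z - (p+w) = p) = (u = w)" "(2*z - (p+w) - w = p) = (u = 2*w)"
    unfolding u_def by (auto simp: algebra_simps)
  have "u = w"
  proof (rule ccontr)
    assume "u \<noteq> w"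
    then have "u = 0" using h1 e1 by simp
    moreover have "u = 2*w" using h2 e1 \<open>u \<noteq> w\<close> by simp
    ultimately show False using w0 by simp
  qed
  then show ?thesis unfolding u_def by (simp add: algebra_simps)
qed

lemma core:
  fixes F :: "complex set" and c :: "complex \<Rightarrow> bool"
  assumes finF: "finite F" and cardF: "card F = 4"
  shows "\<exists>T\<subseteq>F. distinguishing Gamma_tr_rot (\<lambda>x. if x \<in> F then x \<in> T else c x)"
proof (rule ccontr)
  assume H: "\<not> ?thesis"
  define col where "col T = (\<lambda>x. if x \<in> F then x \<in> T else c x)" for T
  have kill: "\<exists>g\<in>Gamma_tr_rot. col T \<circ> g = col T \<and> g \<noteq> id" if "T \<subseteq> F" for T
    using H that unfolding distinguishing_def col_def by blast
  define X where "X T w = {x. col T x \<noteq> col T (x - w)}" for T w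
  have agree: "col T x = col T' x" if "x \<notin> F" for T T' x using that by (simp add: col_def)
  have agreeX: "(x \<in> X T w) = (x \<in> X T' w)" if "x \<notin> F" "x - w \<notin> F" for T T' x w
    using that agree[of x T T'] agree[of "x - w" T T'] by (simp add: X_def)
  have finX: "finite (X T w)" if "finite (X T' w)" for T T' w
  proof -
    have "X T w \<subseteq> X T' w \<union> F \<union> (\<lambda>f. f + w) ` F"
    proof
      fix x assume x: "x \<in> X T w"
      show "x \<in> X T' w \<union> F \<union> (\<lambda>f. f + w) ` F"
      proof (cases "x \<in> F \<or> x - w \<in> F")
        case True
        then show ?thesis
        proof
          assume "x \<in> F" then show ?thesis by blast
        next
          assume "x - w \<in> F"
          then have "x \<in> (\<lambda>f. f + w) ` F" by (rule rev_image_eqI) simp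
          then show ?thesis by blast
        qed
      next
        case False
        then show ?thesis using x agreeX[of x w T T'] by blast
      qed
    qed
    moreover have "finite (X T' w \<union> F \<union> (\<lambda>f. f + w) ` F)" using that finF by simp
    ultimately show ?thesis using finite_subset by blast
  qed
  have two: "\<exists>p1 p2. p1 \<in> F \<and> p2 \<in> F \<and> p1 \<noteq> p2"
  proof -
    have "F \<noteq> {}" using cardF by auto
    then obtain p1 where "p1 \<in> F" by blast
    have "card (F - {p1}) = 3" using cardF \<open>p1 \<in> F\<close> finF by simp
    then have "F - {p1} \<noteq> {}" by (metis card.empty zero_neq_numeral)
    then obtain p2 where "p2 \<in> F - {p1}" by blast
    then show ?thesis using \<open>p1 \<in> F\<close> by blast
  qed
  obtain w where w0: "w \<noteq> 0" and finw: "finite (X {} w)"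
  proof (cases "\<exists>T\<subseteq>F. \<exists>a. a \<noteq> 0 \<and> col T \<circ> (\<lambda>z. z + a) = col T")
    case True
    then obtain T a where T: "T \<subseteq> F" "a \<noteq> 0" "col T \<circ> (\<lambda>z. z + a) = col T" by blast
    have "X T a = {}"
    proof -
      have "col T x = col T (x - a)" for x
        using fun_cong[OF T(3), of "x - a"] by simp
      then show ?thesis unfolding X_def by simp
    qed
    then have "finite (X {} a)" using finX[of T a "{}"] by simp
    then show ?thesis using that T(2) by blast
  next
    case False
    from two obtain p1 p2 where p: "p1 \<in> F" "p2 \<in> F" "p1 \<noteq> p2" by blast
    have rotk: "\<exists>m. col T \<circ> (\<lambda>z. - z + 2*m) = col T" if "T \<subseteq> F" for T
    proof -
      from kill[OF that] obtain g where g: "g \<in> Gamma_tr_rot" "col T \<circ> g = col T" "g \<noteq> id" by blast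
      from g(1) show ?thesis
      proof (cases rule: Gamma_cases)
        case (1 a)
        have "a \<noteq> 0"
        proof
          assume "a = 0"
          then have "g = id" using 1 by (simp add: fun_eq_iff)
          with g(3) show False by simp
        qed
        then show ?thesis using False that g(2) 1 by blast
      next
        case (2 a) then show ?thesis using g(2) by blast
      qed
    qed
    obtain m where m: "col {} \<circ> (\<lambda>z. - z + 2*m) = col {}" using rotk by blast
    have key: "(n \<noteq> m \<and> finite (X {} (2*(n - m)))) \<or> m = p"
      if pF: "p \<in> F" and n: "col {p} \<circ> (\<lambda>z. - z + 2*n) = col {p}" for p n
    proof (cases "n = m")
      case True
      have c1: "col {p} (- p + 2*m) = col {p} p" using fun_cong[OF n, of p] True by simp
      have c0: "col {} (- p + 2*m) = col {} p" using fun_cong[OF m, of p] by simp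
      have "col {p} p = True" "col {} p = False" using pF by (simp_all add: col_def)
      then have "col {p} (- p + 2*m) \<noteq> col {} (- p + 2*m)" using c1 c0 by simp
      then have "- p + 2*m = p" by (simp add: col_def split: if_splits)
      then have "m = p" by (simp add: algebra_simps)
      then show ?thesis by blast
    next
      case False
      have c0p: "col {} y = (col {p} y \<noteq> (y = p))" for y using pF by (auto simp: col_def)
      have sub: "X {} (2*(n - m)) \<subseteq> {p, 2*n - p}"
      proof
        fix x assume x: "x \<in> X {} (2*(n - m))"
        show "x \<in> {p, 2*n - p}"
        proof (rule ccontr)
          assume nx: "x \<notin> {p, 2*n - p}"
          have e: "- (x - 2*(n - m)) + 2*m = 2*n - x" by (simp add: algebra_simps)
          have "col {} (x - 2*(n - m)) = col {} (2*n - x)"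
            using fun_cong[OF m, of "x - 2*(n - m)"] e by simp
          also have "\<dots> = col {p} (2*n - x)" using c0p[of "2*n - x"] nx by auto
          also have "\<dots> = col {p} x" using fun_cong[OF n, of x] by (simp add: algebra_simps)
          also have "\<dots> = col {} x" using c0p[of x] nx by auto
          finally show False using x unfolding X_def by simp
        qed
      qed
      then have "finite (X {} (2*(n - m)))" using finite_subset by blast
      then show ?thesis using False by blast
    qed
    obtain n1 where n1: "col {p1} \<circ> (\<lambda>z. - z + 2*n1) = col {p1}" using rotk[of "{p1}"] p by blast
    obtain n2 where n2: "col {p2} \<circ> (\<lambda>z. - z + 2*n2) = col {p2}" using rotk[of "{p2}"] p by blast
    have k1: "(n1 \<noteq> m \<and> finite (X {} (2*(n1 - m)))) \<or> m = p1" using key p n1 by blast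
    have k2: "(n2 \<noteq> m \<and> finite (X {} (2*(n2 - m)))) \<or> m = p2" using key p n2 by blast
    show ?thesis
    proof (cases "m = p1")
      case True
      then have "n2 \<noteq> m \<and> finite (X {} (2*(n2 - m)))" using k2 p by auto
      then show ?thesis using that[of "2*(n2 - m)"] by simp
    next
      case False
      then have "n1 \<noteq> m \<and> finite (X {} (2*(n1 - m)))" using k1 by auto
      then show ?thesis using that[of "2*(n1 - m)"] by simp
    qed
  qed
  have finall: "finite (X T w)" for T using finX finw by blast
  have symm: "\<exists>z. \<forall>x. (2*z - x \<in> X T w) = (x \<in> X T w)" if "T \<subseteq> F" for T
  proof -
    from kill[OF that] obtain g where g: "g \<in> Gamma_tr_rot" "col T \<circ> g = col T" "g \<noteq> id" by blast
    show ?thesis using lemG[OF g(1) g(3) g(2), of w] finall[of T] unfolding X_def by blast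
  qed
  have Fne: "F \<noteq> {}" using cardF by auto
  obtain a where a: "a \<in> F" "\<forall>y\<in>F. y = a \<or> lt w a y" using lt_min[OF finF Fne w0] by blast
  obtain b where b: "b \<in> F" "\<forall>y\<in>F. y = b \<or> lt w y b" using lt_max[OF finF Fne w0] by blast
  have lbw: "lt w b (b + w)" using lt_add[OF lt_pos[OF w0], of b] by (simp add: add.commute)
  have lxw: "lt w (x - w) x" for x using lt_add[OF lt_neg[OF lt_pos[OF w0]], of x] by simp
  have above: "x \<notin> F \<and> x - w \<notin> F" if "lt w (b + w) x" for x
  proof -
    have bx: "lt w b x" using lt_trans lbw that by blast
    have "lt w b (x - w)" using lt_add[OF that, of "-w"] by simp
    then show ?thesis using b bx lt_irrefl lt_asym by metis
  qed
  have below: "x \<notin> F \<and> x - w \<notin> F" if "lt w x a" for x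
  proof -
    have "lt w (x - w) a" using that lt_trans lxw by blast
    then show ?thesis using a that lt_irrefl lt_asym by metis
  qed
  have bwF: "b + w \<notin> F" using b lbw lt_irrefl lt_asym by metis
  have awF: "a - w \<notin> F" using a lxw[of a] lt_irrefl lt_asym by metis
  have ab: "a \<noteq> b"
  proof
    assume "a = b"
    then have "F \<subseteq> {a}" using a b lt_asym by blast
    then have "card F \<le> 1" using card_mono[of "{a}" F] by simp
    then show False using cardF by simp
  qed
  have "card (F - {a, b}) = 2" using cardF finF a(1) b(1) ab by (simp add: card_Diff_subset)
  then obtain p q where pq0: "F - {a, b} = {p, q}" "p \<noteq> q" by (auto simp: card_2_iff)
  then have pq: "p \<in> F" "q \<in> F" "p \<noteq> a" "p \<noteq> b" "q \<noteq> a" "q \<noteq> b" by blast+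
  define T0 where "T0 = {x. x = a \<and> \<not> c (a - w)} \<union> {x. x = b \<and> \<not> c (b + w)}"
  have T0F: "T0 \<subseteq> F" using a(1) b(1) by (auto simp: T0_def)
  have pT0: "p \<notin> T0" "q \<notin> T0" using pq by (auto simp: T0_def)
  have good: "a \<in> X T w \<and> b + w \<in> X T w"
    if "(a \<in> T) = (\<not> c (a - w))" "(b \<in> T) = (\<not> c (b + w))" for T
    using that a(1) b(1) awF bwF by (simp add: X_def col_def)
  have goodT0: "a \<in> X T0 w \<and> b + w \<in> X T0 w" by (rule good) (use ab in \<open>auto simp: T0_def\<close>)
  have goodI: "a \<in> X (insert r T0) w \<and> b + w \<in> X (insert r T0) w" if "r \<noteq> a" "r \<noteq> b" for r
    by (rule good) (use ab that in \<open>auto simp: T0_def\<close>)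
  have samez: "2*z = 2*z'"
    if h: "a \<in> XA" "b + w \<in> XA" "a \<in> XB" "b + w \<in> XB" "finite XA" "finite XB"
      "\<forall>x. x \<notin> F \<and> x - w \<notin> F \<longrightarrow> (x \<in> XA) = (x \<in> XB)"
      "\<forall>x. (2*z - x \<in> XA) = (x \<in> XA)" "\<forall>x. (2*z' - x \<in> XB) = (x \<in> XB)" for XA XB z z'
  proof -
    have neA: "XA \<noteq> {}" "XB \<noteq> {}" using h by auto
    obtain MA where MA: "MA \<in> XA" "\<forall>y\<in>XA. y = MA \<or> lt w y MA" using lt_max[OF h(5) neA(1) w0] by blast
    obtain MB where MB: "MB \<in> XB" "\<forall>y\<in>XB. y = MB \<or> lt w y MB" using lt_max[OF h(6) neA(2) w0] by blast
    obtain mA where mA: "mA \<in> XA" "\<forall>y\<in>XA. y = mA \<or> lt w mA y" using lt_min[OF h(5) neA(1) w0] by blast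
    obtain mB where mB: "mB \<in> XB" "\<forall>y\<in>XB. y = mB \<or> lt w mB y" using lt_min[OF h(6) neA(2) w0] by blast
    have "\<forall>x. lt w (b + w) x \<longrightarrow> (x \<in> XA) = (x \<in> XB)" using above h(7) by blast
    then have "MA = MB" using max_eq[OF h(2) h(4) _ MA MB] by blast
    moreover have "\<forall>x. lt w x a \<longrightarrow> (x \<in> XA) = (x \<in> XB)" using below h(7) by blast
    then have "mA = mB" using min_eq[OF h(1) h(3) _ mA mB] by blast
    moreover have "2*z = MA + mA" using center[OF h(8) MA mA] .
    moreover have "2*z' = MB + mB" using center[OF h(9) MB mB] .
    ultimately show ?thesis by simp
  qed
  have dlem: "\<forall>x. (x \<in> X (insert r T0) w) = ((x \<in> X T0 w) \<noteq> ((x = r) \<noteq> (x - w = r)))"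
    if "r \<in> F" "r \<notin> T0" for r
  proof
    fix x
    have cc: "col (insert r T0) y = (col T0 y \<noteq> (y = r))" for y using that by (auto simp: col_def)
    show "(x \<in> X (insert r T0) w) = ((x \<in> X T0 w) \<noteq> ((x = r) \<noteq> (x - w = r)))"
      unfolding X_def mem_Collect_eq cc by blast
  qed
  have insF: "insert r T0 \<subseteq> F" if "r \<in> F" for r using that T0F by blast
  have final: "2*z0 = 2*r + w" if h: "r \<in> F" "r \<noteq> a" "r \<noteq> b" "r \<notin> T0"
     and z0: "\<forall>x. (2*z0 - x \<in> X T0 w) = (x \<in> X T0 w)" for r z0
  proof -
    obtain z1 where z1: "\<forall>x. (2*z1 - x \<in> X (insert r T0) w) = (x \<in> X (insert r T0) w)"
      using symm[OF insF[OF h(1)]] by blast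
    have "2*z0 = 2*z1"
      apply (rule samez[OF _ _ _ _ finall finall _ z0 z1])
      using goodT0 goodI[OF h(2,3)] agreeX by auto
    then have "z1 = z0" by simp
    then show ?thesis using pair_center[OF z0 _ dlem[OF h(1) h(4)] w0] z1 by simp
  qed
  obtain z0 where z0: "\<forall>x. (2*z0 - x \<in> X T0 w) = (x \<in> X T0 w)" using symm[OF T0F] by blast
  have "2*z0 = 2*p + w" using final[OF pq(1) pq(3) pq(4) pT0(1) z0] .
  moreover have "2*z0 = 2*q + w" using final[OF pq(2) pq(5) pq(6) pT0(2) z0] .
  ultimately show False using pq0(2) by simp
qed

lemma good4: "ext_good Gamma_tr_rot 4"
  unfolding ext_good_def prop_P_def
proof (intro allI impI)
  fix W :: "complex set" and c :: "complex \<Rightarrow> bool"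
  assume "card_ge W 4 \<and> trivial_pointwise_stabilizer Gamma_tr_rot W"
  then have cg: "infinite W \<or> card W \<ge> 4" by (simp add: card_ge_def)
  obtain F where F: "F \<subseteq> W" "finite F" "card F = 4"
  proof (cases "infinite W")
    case True
    then show ?thesis using infinite_arbitrarily_large[OF True, of 4] that by blast
  next
    case False
    then have "card W \<ge> 4" using cg by blast
    then obtain F where "F \<subseteq> W" "card F = 4" using obtain_subset_with_card_n by metis
    moreover then have "finite F" by (simp add: card_ge_0_finite)
    ultimately show ?thesis using that by blast
  qed
  from core[OF F(2) F(3), of c] obtain T where "T \<subseteq> F"
    and d: "distinguishing Gamma_tr_rot (\<lambda>x. if x \<in> F then x \<in> T else c x)" by blast
  show "\<exists>c'. (\<forall>x. x \<notin> W \<longrightarrow> c' x = c x) \<and> distinguishing Gamma_tr_rot c'"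
    using d F(1) by (intro exI[of _ "\<lambda>x. if x \<in> F then x \<in> T else c x"]) auto
qed

lemma rot_inv:
  fixes c' :: "complex \<Rightarrow> bool" and a :: complex
  assumes S: "\<forall>x. c' x = (x \<notin> S)" and a: "\<forall>s\<in>S. - s + 2*a \<in> S"
  shows "c' \<circ> (\<lambda>z. - z + 2*a) = c'"
proof
  fix x
  have "(- x + 2*a \<in> S) = (x \<in> S)"
  proof
    assume "- x + 2*a \<in> S"
    then have "- (- x + 2*a) + 2*a \<in> S" using a by blast
    then show "x \<in> S" by simp
  qed (use a in blast)
  then show "(c' \<circ> (\<lambda>z. - z + 2*a)) x = c' x" using S by simp
qed

lemma not3: "\<not> ext_good Gamma_tr_rot 3"
proof
  assume g: "ext_good Gamma_tr_rot 3"
  define W :: "complex set" where "W = {-1, 0, 1}"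
  have cW: "card W = 3" by (simp add: W_def)
  have ts: "trivial_pointwise_stabilizer Gamma_tr_rot W"
    unfolding trivial_pointwise_stabilizer_def
  proof (intro ballI impI)
    fix g assume gG: "g \<in> Gamma_tr_rot" and fx: "\<forall>w\<in>W. g w = w"
    from gG show "g = id"
    proof (cases rule: Gamma_cases)
      case (1 a)
      have "g 0 = 0" using fx by (simp add: W_def)
      then have "a = 0" using 1 by simp
      then show ?thesis using 1 by (simp add: fun_eq_iff)
    next
      case (2 a)
      have "g 0 = 0" "g 1 = 1" using fx by (simp_all add: W_def)
      then have "2*a = 0" "-1 + 2*a = 1" using 2 by simp_all
      then show ?thesis by simp
    qed
  qed
  have "card_ge W 3" using cW by (simp add: card_ge_def)
  then have "prop_P Gamma_tr_rot W" using g ts unfolding ext_good_def by (elim allE[of _ W]) simp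
  then have "\<exists>c'. (\<forall>x. x \<notin> W \<longrightarrow> c' x = True) \<and> distinguishing Gamma_tr_rot c'"
    unfolding prop_P_def by (elim allE[of _ "\<lambda>_. True"])
  then obtain c' where ag: "\<forall>x. x \<notin> W \<longrightarrow> c' x = True" and d: "distinguishing Gamma_tr_rot c'"
    by blast
  define S where "S = {x. \<not> c' x}"
  have cS: "\<forall>x. c' x = (x \<notin> S)" by (simp add: S_def)
  have SW: "S \<subseteq> {-1, 0, 1}" using ag by (auto simp: S_def W_def)
  have rne: "(\<lambda>z. - z + 2*a) \<noteq> id" for a :: complex
  proof
    assume "(\<lambda>z. - z + 2*a) = id"
    then have "- 0 + 2*a = 0" "- 1 + 2*a = 1" by (metis id_apply)+
    then show False by simp
  qed
  have "\<exists>g\<in>Gamma_tr_rot. c' \<circ> g = c' \<and> g \<noteq> id"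
  proof (cases "S = {}")
    case True
    then have "c' = (\<lambda>_. True)" using cS by auto
    moreover have "(\<lambda>z::complex. z + 1) \<noteq> id" by (metis add_cancel_left_right id_apply one_neq_zero)
    moreover have "(\<lambda>z::complex. z + 1) \<in> Gamma_tr_rot" by (auto simp: Gamma_tr_rot_def)
    ultimately show ?thesis by (auto simp: comp_def)
  next
    case False
    have "\<exists>a. \<forall>s\<in>S. - s + 2*a \<in> S"
    proof (cases "-1 \<in> S"; cases "0 \<in> S"; cases "1 \<in> S")
      assume "-1 \<in> S" "0 \<in> S" "1 \<in> S"
      then show ?thesis using SW by (intro exI[of _ 0]) auto
    next
      assume "-1 \<in> S" "0 \<in> S" "1 \<notin> S"
      then show ?thesis using SW by (intro exI[of _ "-1/2"]) auto
    next
      assume "-1 \<in> S" "0 \<notin> S" "1 \<in> S"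
      then show ?thesis using SW by (intro exI[of _ 0]) auto
    next
      assume "-1 \<in> S" "0 \<notin> S" "1 \<notin> S"
      then show ?thesis using SW by (intro exI[of _ "-1"]) auto
    next
      assume "-1 \<notin> S" "0 \<in> S" "1 \<in> S"
      then show ?thesis using SW by (intro exI[of _ "1/2"]) auto
    next
      assume "-1 \<notin> S" "0 \<in> S" "1 \<notin> S"
      then show ?thesis using SW by (intro exI[of _ 0]) auto
    next
      assume "-1 \<notin> S" "0 \<notin> S" "1 \<in> S"
      then show ?thesis using SW by (intro exI[of _ 1]) auto
    next
      assume "-1 \<notin> S" "0 \<notin> S" "1 \<notin> S"
      then show ?thesis using SW False by auto
    qed
    then obtain a where "\<forall>s\<in>S. - s + 2*a \<in> S" by blast
    then have "c' \<circ> (\<lambda>z. - z + 2*a) = c'" using rot_inv[OF cS] by blast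
    moreover have "(\<lambda>z. - z + 2*a) \<in> Gamma_tr_rot" by (auto simp: Gamma_tr_rot_def)
    ultimately show ?thesis using rne by blast
  qed
  then show False using d unfolding distinguishing_def by blast
qed

lemma mono_good: "ext_good G m \<Longrightarrow> m \<le> m' \<Longrightarrow> ext_good G m'"
  unfolding ext_good_def card_ge_def by auto

theorem lemma3p2:
  shows "ext_D Gamma_tr_rot = 4"
proof -
  have L: "(LEAST m. ext_good Gamma_tr_rot m) = 4"
  proof (rule Least_equality)
    show "ext_good Gamma_tr_rot 4" by (rule good4)
  next
    fix y assume "ext_good Gamma_tr_rot y"
    show "4 \<le> y"
    proof (rule ccontr)
      assume "\<not> 4 \<le> y"
      then have "y \<le> 3" by simp
      then have "ext_good Gamma_tr_rot 3" using mono_good \<open>ext_good Gamma_tr_rot y\<close> by blast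
      then show False using not3 by blast
    qed
  qed
  have "\<exists>m. ext_good Gamma_tr_rot m" using good4 by blast
  then show ?thesis unfolding ext_D_def using L by (simp add: numeral_eq_enat)
qed

end
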